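(* Two zero-mean nonsingular Gaussian reciprocal sequences over $[0,N]$ share the same reciprocal model if and only if they share the same reciprocal $CM_L$ model.
   Context: $[0,N]=(0,1,\ldots,N)$; $x=[x_0',\ldots,x_N']'$, $C=\mathrm{Cov}(x)$, $'$ denotes transpose. A sequence $[x_k]$ is reciprocal if for all $j<k<l$ in $[0,N]$ the conditional distribution of $x_k$ given $x_0,\ldots,x_j,x_l,\ldots,x_N$ equals that given $x_j,x_l$. Reciprocal model: a zero-mean nonsingular Gaussian reciprocal sequence obeys $R^0_kx_k-R^-_kx_{k-1}-R^+_kx_{k+1}=e^R_k$, $k\in[1,N-1]$, with $R^0_k=A_k$, $R^+_k=-B_k$, $R^-_k=-B_{k-1}'$, where $A_k$ is the $(k,k)$ block and $B_k$ the $(k,k+1)$ block of $C^{-1}$; two sequences share the same reciprocal model if these coefficients for $k\in[1,N-1]$ coincide. Reciprocal $CM_L$ model: a reciprocal sequence obeys $x_k=G_{k,k-1}x_{k-1}+G_{k,N}x_N+e_k$, $k\in[1,N-1]$, where $G_{k,k-1}x_{k-1}+G_{k,N}x_N=E[x_k\mid x_0,\ldots,x_{k-1},x_N]$ and $[e_k]$ is a zero-mean white Gaussian sequence with $G_k=\mathrm{Cov}(e_k)$; two sequences share the same reciprocal $CM_L$ model if the coefficients $G_{k,k-1},G_{k,N},G_k$, $k\in[1,N-1]$, coincide. *)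

theory Defs
  imports "Jordan_Normal_Form.DL_Submatrix" "Jordan_Normal_Form.Gauss_Jordan_Elimination"
begin

text \<open>A zero-mean nonsingular Gaussian sequence x_0,...,x_N with x_k in R^d is described
by the covariance C = Cov(x) of the stacked vector x = [x_0',...,x_N']', an
((N+1)d) x ((N+1)d) real matrix; block k occupies coordinates k*d ..< (k+1)*d.\<close>

definition minv :: "real mat \<Rightarrow> real mat" where
  "minv M = the (mat_inverse M)"

definition blk :: "nat \<Rightarrow> nat \<Rightarrow> nat set" where
  "blk d k = {k * d ..< Suc k * d}"

definition blks :: "nat \<Rightarrow> nat set \<Rightarrow> nat set" where
  "blks d K = (\<Union>k\<in>K. blk d k)"

definition gauss_cov :: "nat \<Rightarrow> nat \<Rightarrow> real mat \<Rightarrow> bool" where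
  "gauss_cov N d C \<longleftrightarrow> C \<in> carrier_mat (Suc N * d) (Suc N * d) \<and> transpose_mat C = C \<and>
     (\<forall>v \<in> carrier_vec (Suc N * d). v \<noteq> 0\<^sub>v (Suc N * d) \<longrightarrow> v \<bullet> (C *\<^sub>v v) > 0)"

text \<open>For a Gaussian vector, the conditional distribution of x_I given x_S is
N(K x_S, P) with K = C_IS C_SS^{-1} and P = C_II - C_IS C_SS^{-1} C_SI.
cond_gain gives K as a linear map on the whole stacked vector x (zero columns
outside S); cond_cov gives P.\<close>
definition cond_gain :: "real mat \<Rightarrow> nat set \<Rightarrow> nat set \<Rightarrow> real mat" where
  "cond_gain C I S = submatrix C I S * minv (submatrix C S S) * submatrix (1\<^sub>m (dim_row C)) S UNIV"

definition cond_cov :: "real mat \<Rightarrow> nat set \<Rightarrow> nat set \<Rightarrow> real mat" where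
  "cond_cov C I S = submatrix C I I - submatrix C I S * minv (submatrix C S S) * submatrix C S I"

text \<open>Equality of the conditional distributions of x_I given x_S1 and given x_S2
(as Gaussian laws depending on the conditioning values).\<close>
definition same_cond_dist :: "real mat \<Rightarrow> nat set \<Rightarrow> nat set \<Rightarrow> nat set \<Rightarrow> bool" where
  "same_cond_dist C I S1 S2 \<longleftrightarrow>
     cond_gain C I S1 = cond_gain C I S2 \<and> cond_cov C I S1 = cond_cov C I S2"

definition reciprocal :: "nat \<Rightarrow> nat \<Rightarrow> real mat \<Rightarrow> bool" where
  "reciprocal N d C \<longleftrightarrow>
     (\<forall>j k l. j < k \<and> k < l \<and> l \<le> N \<longrightarrow>
        same_cond_dist C (blk d k) (blks d ({0..j} \<union> {l..N})) (blks d {j, l}))"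

definition blockA :: "nat \<Rightarrow> real mat \<Rightarrow> nat \<Rightarrow> real mat" where
  "blockA d C k = submatrix (minv C) (blk d k) (blk d k)"

definition blockB :: "nat \<Rightarrow> real mat \<Rightarrow> nat \<Rightarrow> real mat" where
  "blockB d C k = submatrix (minv C) (blk d k) (blk d (Suc k))"

definition R0 :: "nat \<Rightarrow> real mat \<Rightarrow> nat \<Rightarrow> real mat" where
  "R0 d C k = blockA d C k"

definition Rplus :: "nat \<Rightarrow> real mat \<Rightarrow> nat \<Rightarrow> real mat" where
  "Rplus d C k = - blockB d C k"

definition Rminus :: "nat \<Rightarrow> real mat \<Rightarrow> nat \<Rightarrow> real mat" where
  "Rminus d C k = - transpose_mat (blockB d C (k - 1))"

definition same_reciprocal_model :: "nat \<Rightarrow> nat \<Rightarrow> real mat \<Rightarrow> real mat \<Rightarrow> bool" where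
  "same_reciprocal_model N d C1 C2 \<longleftrightarrow>
     (\<forall>k \<in> {1 .. N - 1}. R0 d C1 k = R0 d C2 k \<and> Rplus d C1 k = Rplus d C2 k \<and>
                        Rminus d C1 k = Rminus d C2 k)"

text \<open>Reciprocal CM_L model: E[x_k | x_0..x_{k-1}, x_N] = G_{k,k-1} x_{k-1} + G_{k,N} x_N,
e_k = x_k - E[x_k | ...], G_k = Cov(e_k).\<close>
definition CML_cond :: "nat \<Rightarrow> nat \<Rightarrow> nat \<Rightarrow> nat set" where
  "CML_cond N d k = blks d ({0..<k} \<union> {N})"

definition G_prev :: "nat \<Rightarrow> nat \<Rightarrow> real mat \<Rightarrow> nat \<Rightarrow> real mat" where
  "G_prev N d C k = submatrix (cond_gain C (blk d k) (CML_cond N d k)) UNIV (blk d (k - 1))"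

definition G_last :: "nat \<Rightarrow> nat \<Rightarrow> real mat \<Rightarrow> nat \<Rightarrow> real mat" where
  "G_last N d C k = submatrix (cond_gain C (blk d k) (CML_cond N d k)) UNIV (blk d N)"

definition G_cov :: "nat \<Rightarrow> nat \<Rightarrow> real mat \<Rightarrow> nat \<Rightarrow> real mat" where
  "G_cov N d C k = cond_cov C (blk d k) (CML_cond N d k)"

definition same_CML_model :: "nat \<Rightarrow> nat \<Rightarrow> real mat \<Rightarrow> real mat \<Rightarrow> bool" where
  "same_CML_model N d C1 C2 \<longleftrightarrow>
     (\<forall>k \<in> {1 .. N - 1}. G_prev N d C1 k = G_prev N d C2 k \<and> G_last N d C1 k = G_last N d C2 k \<and>
                        G_cov N d C1 k = G_cov N d C2 k)"

end

theory Submission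
  imports Defs "Jordan_Normal_Form.Determinant"
begin

lemma set_lt_eq: "S \<subseteq> {..<n} \<Longrightarrow> {i. i<n \<and> i\<in>S} = S" by auto

lemma pick_inj: assumes "a < card S" "b < card S" "pick S a = pick S b" shows "a = b"
proof (rule ccontr)
  assume "a \<noteq> b"
  hence "a < b \<or> b < a" by linarith
  thus False
  proof
    assume "a < b" thus False using pick_mono[of b S a] assms by simp
  next
    assume "b < a" thus False using pick_mono[of a S b] assms by simp
  qed
qed

lemma pick_bij: assumes "finite S" shows "bij_betw (pick S) {..<card S} S"
proof -
  have inj: "inj_on (pick S) {..<card S}"
    by (rule inj_onI) (simp add: pick_inj)
  have sub: "pick S ` {..<card S} \<subseteq> S" using pick_in_set by auto
  have "card (pick S ` {..<card S}) = card S" using card_image[OF inj] by simp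
  hence "pick S ` {..<card S} = S" using card_subset_eq[OF assms sub] by simp
  thus ?thesis using inj unfolding bij_betw_def by simp
qed

lemma sum_pick: assumes "finite S" shows "sum f S = (\<Sum>b<card S. f (pick S b))"
  using sum.reindex_bij_betw[OF pick_bij[OF assms], of f] by simp

lemma pick_lt: assumes "S \<subseteq> {..<n}" "b < card S" shows "pick S b < n"
  using pick_in_set[of b S] assms by auto

lemma card_sub_lt: "S \<subseteq> {..<n} \<Longrightarrow> card S \<le> n"
  using card_mono[of "{..<n}" S] by simp

lemma dim_sub_S: assumes "S \<subseteq> {..<n}" "dim_row A = n"
  shows "dim_row (submatrix A S J) = card S"
  unfolding dim_submatrix assms(2) set_lt_eq[OF assms(1)] ..

lemma dim_sub_S2: assumes "S \<subseteq> {..<n}" "dim_col A = n"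
  shows "dim_col (submatrix A J S) = card S"
  unfolding dim_submatrix assms(2) set_lt_eq[OF assms(1)] ..

lemma sub_carrier: assumes "A \<in> carrier_mat r c" "I \<subseteq> {..<r}" "J \<subseteq> {..<c}"
  shows "submatrix A I J \<in> carrier_mat (card I) (card J)"
proof -
  have "dim_row A = r" "dim_col A = c" using assms(1) by auto
  thus ?thesis unfolding carrier_mat_def using set_lt_eq[OF assms(2)] set_lt_eq[OF assms(3)] by (simp add: dim_submatrix)
qed

lemma sub_carrier_U1: assumes "A \<in> carrier_mat r c" "J \<subseteq> {..<c}"
  shows "submatrix A UNIV J \<in> carrier_mat r (card J)"
proof -
  have "dim_row A = r" "dim_col A = c" using assms(1) by auto
  thus ?thesis unfolding carrier_mat_def using set_lt_eq[OF assms(2)] by (simp add: dim_submatrix)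
qed

lemma sub_carrier_U2: assumes "A \<in> carrier_mat r c" "I \<subseteq> {..<r}"
  shows "submatrix A I UNIV \<in> carrier_mat (card I) c"
proof -
  have "dim_row A = r" "dim_col A = c" using assms(1) by auto
  thus ?thesis unfolding carrier_mat_def using set_lt_eq[OF assms(2)] by (simp add: dim_submatrix)
qed

lemma sub_idx: assumes "A \<in> carrier_mat r c" "I \<subseteq> {..<r}" "J \<subseteq> {..<c}"
  "i < card I" "j < card J"
  shows "submatrix A I J $$ (i,j) = A $$ (pick I i, pick J j)"
  using assms by (intro submatrix_index) (auto simp: set_lt_eq)

lemma sub_idx_U1: assumes "A \<in> carrier_mat r c" "J \<subseteq> {..<c}" "i < r" "j < card J"
  shows "submatrix A UNIV J $$ (i,j) = A $$ (i, pick J j)"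
proof -
  have "submatrix A UNIV J $$ (i,j) = A $$ (pick UNIV i, pick J j)"
    using assms by (intro submatrix_index) (auto simp: set_lt_eq)
  thus ?thesis by (simp add: pick_UNIV)
qed

lemma sub_idx_U2: assumes "A \<in> carrier_mat r c" "I \<subseteq> {..<r}" "i < card I" "j < c"
  shows "submatrix A I UNIV $$ (i,j) = A $$ (pick I i, j)"
proof -
  have "submatrix A I UNIV $$ (i,j) = A $$ (pick I i, pick UNIV j)"
    using assms by (intro submatrix_index) (auto simp: set_lt_eq)
  thus ?thesis by (simp add: pick_UNIV)
qed

lemma sum_delta_lt: "j < (n::nat) \<Longrightarrow> (\<Sum>l<n. (if j = l then 1 else 0) * (f l::real)) = f j"
proof -
  assume "j < n"
  have "(\<Sum>l<n. (if j = l then 1 else 0) * (f l::real)) = (\<Sum>l<n. if l = j then f l else 0)"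
    by (rule sum.cong) auto
  also have "\<dots> = f j" using \<open>j < n\<close> by (subst sum.delta) auto
  finally show ?thesis .
qed

lemma sum_delta_lt2: "j < (n::nat) \<Longrightarrow> (\<Sum>l<n. (f l::real) * (if j = l then 1 else 0)) = f j"
proof -
  assume "j < n"
  have "(\<Sum>l<n. (f l::real) * (if j = l then 1 else 0)) = (\<Sum>l<n. if l = j then f l else 0)"
    by (rule sum.cong) auto
  also have "\<dots> = f j" using \<open>j < n\<close> by (subst sum.delta) auto
  finally show ?thesis .
qed

lemma ES_mult: fixes A :: "real mat" assumes "S \<subseteq> {..<n}" "A \<in> carrier_mat n c"
  shows "submatrix (1\<^sub>m n) S UNIV * A = submatrix A S UNIV"
proof (rule eq_matI)
  have E: "submatrix (1\<^sub>m n :: real mat) S UNIV \<in> carrier_mat (card S) n"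
    using sub_carrier_U2[OF one_carrier_mat assms(1)] .
  have A2: "submatrix A S UNIV \<in> carrier_mat (card S) c" using sub_carrier_U2[OF assms(2,1)] .
  show "dim_row (submatrix (1\<^sub>m n) S UNIV * A) = dim_row (submatrix A S UNIV)" using E A2 unfolding carrier_mat_def by simp
  show "dim_col (submatrix (1\<^sub>m n) S UNIV * A) = dim_col (submatrix A S UNIV)" using A2 assms unfolding carrier_mat_def by simp
  fix i j assume ij: "i < dim_row (submatrix A S UNIV)" "j < dim_col (submatrix A S UNIV)"
  hence i: "i < card S" and j: "j < c" using A2 by auto
  have p: "pick S i < n" using pick_lt[OF assms(1) i] .
  have "(submatrix (1\<^sub>m n) S UNIV * A) $$ (i,j) = (\<Sum>l\<in>{0..<n}. submatrix (1\<^sub>m n) S UNIV $$ (i,l) * A $$ (l,j))"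
    using E assms i j p by (simp add: scalar_prod_def)
  also have "\<dots> = (\<Sum>l<n. (if pick S i = l then 1 else 0) * A $$ (l,j))"
    unfolding lessThan_atLeast0[symmetric] by (rule sum.cong) (use p in \<open>auto simp: sub_idx_U2[OF one_carrier_mat assms(1) i]\<close>)
  also have "\<dots> = A $$ (pick S i, j)" using sum_delta_lt[OF p] by simp
  also have "\<dots> = submatrix A S UNIV $$ (i,j)" using sub_idx_U2[OF assms(2,1) i j] by simp
  finally show "(submatrix (1\<^sub>m n) S UNIV * A) $$ (i,j) = submatrix A S UNIV $$ (i,j)" .
qed

lemma mult_ESt: fixes A :: "real mat" assumes "S \<subseteq> {..<n}" "A \<in> carrier_mat r n"
  shows "A * transpose_mat (submatrix (1\<^sub>m n) S UNIV) = submatrix A UNIV S"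
proof (rule eq_matI)
  have E: "submatrix (1\<^sub>m n :: real mat) S UNIV \<in> carrier_mat (card S) n"
    using sub_carrier_U2[OF one_carrier_mat assms(1)] .
  have A2: "submatrix A UNIV S \<in> carrier_mat r (card S)" using sub_carrier_U1[OF assms(2,1)] .
  show "dim_row (A * transpose_mat (submatrix (1\<^sub>m n) S UNIV)) = dim_row (submatrix A UNIV S)" using A2 assms unfolding carrier_mat_def by simp
  show "dim_col (A * transpose_mat (submatrix (1\<^sub>m n) S UNIV)) = dim_col (submatrix A UNIV S)" using E A2 unfolding carrier_mat_def by simp
  fix i j assume ij: "i < dim_row (submatrix A UNIV S)" "j < dim_col (submatrix A UNIV S)"
  hence i: "i < r" and j: "j < card S" using A2 by auto
  have p: "pick S j < n" using pick_lt[OF assms(1) j] .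
  have "(A * transpose_mat (submatrix (1\<^sub>m n) S UNIV)) $$ (i,j) = (\<Sum>l\<in>{0..<n}. A $$ (i,l) * submatrix (1\<^sub>m n) S UNIV $$ (j,l))"
    using E assms i j p by (simp add: scalar_prod_def)
  also have "\<dots> = (\<Sum>l<n. A $$ (i,l) * (if pick S j = l then 1 else 0))"
    unfolding lessThan_atLeast0[symmetric] by (rule sum.cong) (use p in \<open>auto simp: sub_idx_U2[OF one_carrier_mat assms(1) j]\<close>)
  also have "\<dots> = A $$ (i, pick S j)" using sum_delta_lt2[OF p] by simp
  also have "\<dots> = submatrix A UNIV S $$ (i,j)" using sub_idx_U1[OF assms(2,1) i j] by simp
  finally show "(A * transpose_mat (submatrix (1\<^sub>m n) S UNIV)) $$ (i,j) = submatrix A UNIV S $$ (i,j)" .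
qed

lemma sub_sub: assumes "A \<in> carrier_mat r c" "I \<subseteq> {..<r}" "J \<subseteq> {..<c}"
  shows "submatrix (submatrix A I UNIV) UNIV J = submatrix A I J"
proof -
  have B: "submatrix A I UNIV \<in> carrier_mat (card I) c" using sub_carrier_U2[OF assms(1,2)] .
  show ?thesis
  proof (rule eq_matI)
    show "dim_row (submatrix (submatrix A I UNIV) UNIV J) = dim_row (submatrix A I J)"
      using sub_carrier_U1[OF B assms(3)] sub_carrier[OF assms] by simp
    show "dim_col (submatrix (submatrix A I UNIV) UNIV J) = dim_col (submatrix A I J)"
      using sub_carrier_U1[OF B assms(3)] sub_carrier[OF assms] by simp
    fix i j assume "i < dim_row (submatrix A I J)" "j < dim_col (submatrix A I J)"
    hence i: "i < card I" and j: "j < card J" using sub_carrier[OF assms] by auto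
    show "submatrix (submatrix A I UNIV) UNIV J $$ (i,j) = submatrix A I J $$ (i,j)"
      using sub_idx_U1[OF B assms(3) i j] sub_idx_U2[OF assms(1,2) i pick_lt[OF assms(3) j]]
        sub_idx[OF assms i j] by simp
  qed
qed

lemma minv_inv: fixes A :: "real mat" assumes A: "A \<in> carrier_mat n n"
  and inj: "\<And>v. v \<in> carrier_vec n \<Longrightarrow> A *\<^sub>v v = 0\<^sub>v n \<Longrightarrow> v = 0\<^sub>v n"
  shows "A * minv A = 1\<^sub>m n \<and> minv A * A = 1\<^sub>m n \<and> minv A \<in> carrier_mat n n"
proof -
  have "det A \<noteq> 0"
  proof
    assume "det A = 0"
    then obtain v where "v \<in> carrier_vec n" "v \<noteq> 0\<^sub>v n" "A *\<^sub>v v = 0\<^sub>v n"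
      using det_0_iff_vec_prod_zero[OF A] by auto
    thus False using inj by auto
  qed
  hence "A \<in> Units (ring_mat TYPE(real) n n)" using det_non_zero_imp_unit[OF A] by simp
  hence "mat_inverse A \<noteq> None" using mat_inverse(1)[OF A, where b=n] by blast
  then obtain B where "mat_inverse A = Some B" by auto
  thus ?thesis using mat_inverse(2)[OF A] unfolding minv_def by simp
qed

abbreviation E :: "nat \<Rightarrow> nat set \<Rightarrow> real mat" where
  "E n S \<equiv> submatrix (1\<^sub>m n) S UNIV"

lemma E_carrier: "S \<subseteq> {..<n} \<Longrightarrow> E n S \<in> carrier_mat (card S) n"
  using sub_carrier_U2[OF one_carrier_mat] .

lemma E_idx: assumes "S \<subseteq> {..<n}" "l < card S" "j < n"
  shows "E n S $$ (l,j) = (if pick S l = j then 1 else 0)"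
  using sub_idx_U2[OF one_carrier_mat assms] pick_lt[OF assms(1,2)] assms(3) by simp

lemma sandwich: fixes C :: "real mat"
  assumes "C \<in> carrier_mat n n" "I \<subseteq> {..<n}" "J \<subseteq> {..<n}"
  shows "E n I * C * transpose_mat (E n J) = submatrix C I J"
proof -
  have "E n I * C = submatrix C I UNIV" using ES_mult[OF assms(2,1)] .
  moreover have "submatrix C I UNIV \<in> carrier_mat (card I) n" using sub_carrier_U2[OF assms(1,2)] .
  ultimately show ?thesis using mult_ESt[OF assms(3)] sub_sub[OF assms] by simp
qed

lemma sub_one: assumes "S \<subseteq> {..<n}" shows "submatrix (1\<^sub>m n :: real mat) S S = 1\<^sub>m (card S)"
proof (rule eq_matI)
  have c: "submatrix (1\<^sub>m n :: real mat) S S \<in> carrier_mat (card S) (card S)"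
    using sub_carrier[OF one_carrier_mat assms assms] .
  thus "dim_row (submatrix (1\<^sub>m n :: real mat) S S) = dim_row (1\<^sub>m (card S) :: real mat)"
    "dim_col (submatrix (1\<^sub>m n :: real mat) S S) = dim_col (1\<^sub>m (card S) :: real mat)" by auto
  fix i j assume "i < dim_row (1\<^sub>m (card S) :: real mat)" "j < dim_col (1\<^sub>m (card S) :: real mat)"
  hence i: "i < card S" and j: "j < card S" by auto
  show "submatrix (1\<^sub>m n :: real mat) S S $$ (i,j) = 1\<^sub>m (card S) $$ (i,j)"
    using sub_idx[OF one_carrier_mat assms assms i j] pick_lt[OF assms i] pick_lt[OF assms j]
      pick_inj[OF i j] i j by auto
qed

lemma EEt: assumes "S \<subseteq> {..<n}" shows "E n S * transpose_mat (E n S) = 1\<^sub>m (card S)"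
  using sandwich[OF one_carrier_mat assms assms] sub_one[OF assms] E_carrier[OF assms] by simp

lemma sub_inj: fixes C :: "real mat"
  assumes C: "C \<in> carrier_mat n n"
    and pd: "\<forall>v\<in>carrier_vec n. v \<noteq> 0\<^sub>v n \<longrightarrow> v \<bullet> (C *\<^sub>v v) > 0"
    and S: "S \<subseteq> {..<n}"
    and v: "v \<in> carrier_vec (card S)" and z: "submatrix C S S *\<^sub>v v = 0\<^sub>v (card S)"
  shows "v = 0\<^sub>v (card S)"
proof (rule ccontr)
  assume nz: "v \<noteq> 0\<^sub>v (card S)"
  have ES: "E n S \<in> carrier_mat (card S) n" using E_carrier[OF S] .
  define u where "u = transpose_mat (E n S) *\<^sub>v v"
  have u: "u \<in> carrier_vec n" unfolding u_def using ES v by auto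
  have "E n S *\<^sub>v u = (E n S * transpose_mat (E n S)) *\<^sub>v v"
    unfolding u_def using ES v by simp
  also have "\<dots> = v" using EEt[OF S] v by simp
  finally have Eu: "E n S *\<^sub>v u = v" .
  have unz: "u \<noteq> 0\<^sub>v n"
  proof
    assume "u = 0\<^sub>v n"
    hence "E n S *\<^sub>v u = 0\<^sub>v (card S)" using ES by auto
    thus False using Eu nz by simp
  qed
  have "u \<bullet> (C *\<^sub>v u) = v \<bullet> (E n S *\<^sub>v (C *\<^sub>v u))"
    using transpose_vec_mult_scalar[OF ES _ v, of "C *\<^sub>v u"] C u unfolding u_def[symmetric] by simp
  also have "E n S *\<^sub>v (C *\<^sub>v u) = (E n S * C * transpose_mat (E n S)) *\<^sub>v v"
  proof -
    have Et: "transpose_mat (E n S) \<in> carrier_mat n (card S)" using ES by simp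
    have "(E n S * C * transpose_mat (E n S)) *\<^sub>v v = (E n S * C) *\<^sub>v (transpose_mat (E n S) *\<^sub>v v)"
      using assoc_mult_mat_vec[of "E n S * C" "card S" n "transpose_mat (E n S)" "card S" v] ES C Et v by simp
    also have "\<dots> = E n S *\<^sub>v (C *\<^sub>v u)" unfolding u_def[symmetric]
      using assoc_mult_mat_vec[OF ES C u] .
    finally show ?thesis by simp
  qed
  also have "\<dots> = 0\<^sub>v (card S)" using sandwich[OF C S S] z by simp
  also have "v \<bullet> 0\<^sub>v (card S) = 0" using v by simp
  finally have "u \<bullet> (C *\<^sub>v u) = 0" .
  thus False using pd u unz by force
qed


lemma char:
  fixes C :: "real mat"
  assumes C: "C \<in> carrier_mat n n"
    and pd: "\<forall>v\<in>carrier_vec n. v \<noteq> 0\<^sub>v n \<longrightarrow> v \<bullet> (C *\<^sub>v v) > 0"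
    and S: "S \<subseteq> {..<n}" and I: "I \<subseteq> {..<n}" and disj: "S \<inter> I = {}"
  shows "cond_gain C I S \<in> carrier_mat (card I) n"
    "cond_cov C I S \<in> carrier_mat (card I) (card I)"
    "\<And>a j. a < card I \<Longrightarrow> j < n \<Longrightarrow> j \<notin> S \<Longrightarrow> cond_gain C I S $$ (a,j) = 0"
    "(E n I - cond_gain C I S) * C * transpose_mat (E n S) = 0\<^sub>m (card I) (card S)"
    "(E n I - cond_gain C I S) * C * transpose_mat (E n I) = cond_cov C I S"
proof -
  define M where "M = minv (submatrix C S S)"
  have CSS: "submatrix C S S \<in> carrier_mat (card S) (card S)" using sub_carrier[OF C S S] .
  have Minv: "submatrix C S S * M = 1\<^sub>m (card S) \<and> M * submatrix C S S = 1\<^sub>m (card S) \<and> M \<in> carrier_mat (card S) (card S)"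
    unfolding M_def by (rule minv_inv[OF CSS], rule sub_inj[OF C pd S])
  hence M: "M \<in> carrier_mat (card S) (card S)" and MC: "M * submatrix C S S = 1\<^sub>m (card S)" by auto
  have CIS: "submatrix C I S \<in> carrier_mat (card I) (card S)" using sub_carrier[OF C I S] .
  have CSI: "submatrix C S I \<in> carrier_mat (card S) (card I)" using sub_carrier[OF C S I] .
  have CII: "submatrix C I I \<in> carrier_mat (card I) (card I)" using sub_carrier[OF C I I] .
  have ES: "E n S \<in> carrier_mat (card S) n" using E_carrier[OF S] .
  have EI: "E n I \<in> carrier_mat (card I) n" using E_carrier[OF I] .
  define K where "K = submatrix C I S * M"
  have K: "K \<in> carrier_mat (card I) (card S)" unfolding K_def using CIS M by simp
  have dC: "dim_row C = n" using C by simp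
  have Gdef: "cond_gain C I S = K * E n S" unfolding cond_gain_def K_def M_def dC ..
  have Vdef: "cond_cov C I S = submatrix C I I - K * submatrix C S I" unfolding cond_cov_def K_def M_def ..
  have G: "cond_gain C I S \<in> carrier_mat (card I) n" unfolding Gdef using K ES by simp
  show "cond_gain C I S \<in> carrier_mat (card I) n" by (rule G)
  show "cond_cov C I S \<in> carrier_mat (card I) (card I)" unfolding Vdef using minus_carrier_mat[OF mult_carrier_mat[OF K CSI]] .
  show "\<And>a j. a < card I \<Longrightarrow> j < n \<Longrightarrow> j \<notin> S \<Longrightarrow> cond_gain C I S $$ (a,j) = 0"
  proof -
    fix a j assume a: "a < card I" and j: "j < n" and jS: "j \<notin> S"
    have "cond_gain C I S $$ (a,j) = (\<Sum>l\<in>{0..<card S}. K $$ (a,l) * E n S $$ (l,j))"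
      unfolding Gdef using K ES a j by (simp add: scalar_prod_def)
    also have "\<dots> = 0"
    proof (rule sum.neutral, rule ballI)
      fix l assume "l \<in> {0..<card S}"
      hence l: "l < card S" by simp
      have "pick S l \<in> S" using pick_in_set[of l S] l by simp
      hence "pick S l \<noteq> j" using jS by auto
      thus "K $$ (a,l) * E n S $$ (l,j) = 0"
        using E_idx[OF S l j] by simp
    qed
    finally show "cond_gain C I S $$ (a,j) = 0" .
  qed
  have GCE: "cond_gain C I S * C * transpose_mat (E n J) = K * submatrix C S J" if J: "J \<subseteq> {..<n}" for J
  proof -
    have EJ: "transpose_mat (E n J) \<in> carrier_mat n (card J)" using E_carrier[OF J] by simp
    have "cond_gain C I S * C * transpose_mat (E n J) = ((K * E n S) * C) * transpose_mat (E n J)"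
      unfolding Gdef ..
    also have "(K * E n S) * C = K * (E n S * C)" using K ES C by (rule assoc_mult_mat)
    also have "(K * (E n S * C)) * transpose_mat (E n J) = K * ((E n S * C) * transpose_mat (E n J))"
      using K mult_carrier_mat[OF ES C] EJ by (rule assoc_mult_mat)
    also have "(E n S * C) * transpose_mat (E n J) = submatrix C S J" using sandwich[OF C S J] .
    finally show ?thesis .
  qed
  have DCE: "(E n I - cond_gain C I S) * C * transpose_mat (E n J) = submatrix C I J - K * submatrix C S J"
    if J: "J \<subseteq> {..<n}" for J
  proof -
    have EJ: "transpose_mat (E n J) \<in> carrier_mat n (card J)" using E_carrier[OF J] by simp
    have "(E n I - cond_gain C I S) * C = E n I * C - cond_gain C I S * C"
      using EI G C by (rule minus_mult_distrib_mat)
    hence "(E n I - cond_gain C I S) * C * transpose_mat (E n J) = (E n I * C - cond_gain C I S * C) * transpose_mat (E n J)"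
      by simp
    also have "\<dots> = E n I * C * transpose_mat (E n J) - cond_gain C I S * C * transpose_mat (E n J)"
      using mult_carrier_mat[OF EI C] mult_carrier_mat[OF G C] EJ by (rule minus_mult_distrib_mat)
    also have "\<dots> = submatrix C I J - K * submatrix C S J" using sandwich[OF C I J] GCE[OF J] by simp
    finally show ?thesis .
  qed
  have "K * submatrix C S S = submatrix C I S"
  proof -
    have "K * submatrix C S S = submatrix C I S * (M * submatrix C S S)" unfolding K_def
      using CIS M CSS by (rule assoc_mult_mat)
    also have "\<dots> = submatrix C I S" using MC CIS by simp
    finally show ?thesis .
  qed
  thus "(E n I - cond_gain C I S) * C * transpose_mat (E n S) = 0\<^sub>m (card I) (card S)"
    using DCE[OF S] CIS by simp
  show "(E n I - cond_gain C I S) * C * transpose_mat (E n I) = cond_cov C I S"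
    using DCE[OF I] Vdef by simp
qed

lemma qf_eq: fixes C :: "real mat" assumes C: "C \<in> carrier_mat n n"
  shows "vec n u \<bullet> (C *\<^sub>v vec n u) = (\<Sum>i<n. u i * (\<Sum>j<n. C $$ (i,j) * u j))"
  using C by (simp add: scalar_prod_def lessThan_atLeast0 row_def)

lemma pd_sum: fixes C :: "real mat" assumes C: "C \<in> carrier_mat n n"
  and pd: "\<forall>v\<in>carrier_vec n. v \<noteq> 0\<^sub>v n \<longrightarrow> v \<bullet> (C *\<^sub>v v) > 0"
  and nz: "\<exists>i<n. u i \<noteq> 0"
  shows "0 < (\<Sum>i<n. u i * (\<Sum>j<n. C $$ (i,j) * u j))"
proof -
  have "vec n u \<noteq> 0\<^sub>v n" using nz by (metis index_vec index_zero_vec(1))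
  hence "vec n u \<bullet> (C *\<^sub>v vec n u) > 0" using pd by auto
  thus ?thesis using qf_eq[OF C] by simp
qed

lemma inv_props: fixes C :: "real mat"
  assumes C: "C \<in> carrier_mat n n" and sym: "transpose_mat C = C"
  and pd: "\<forall>v\<in>carrier_vec n. v \<noteq> 0\<^sub>v n \<longrightarrow> v \<bullet> (C *\<^sub>v v) > 0"
  shows "minv C \<in> carrier_mat n n" "C * minv C = 1\<^sub>m n" "minv C * C = 1\<^sub>m n"
    "transpose_mat (minv C) = minv C"
    "\<forall>v\<in>carrier_vec n. v \<noteq> 0\<^sub>v n \<longrightarrow> v \<bullet> (minv C *\<^sub>v v) > 0"
proof -
  have inj: "\<And>v. v \<in> carrier_vec n \<Longrightarrow> C *\<^sub>v v = 0\<^sub>v n \<Longrightarrow> v = 0\<^sub>v n"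
  proof (rule ccontr)
    fix v assume v: "v \<in> carrier_vec n" and z: "C *\<^sub>v v = 0\<^sub>v n" and nz: "v \<noteq> 0\<^sub>v n"
    have "v \<bullet> (C *\<^sub>v v) = 0" using z v by simp
    thus False using pd v nz by force
  qed
  note inv = minv_inv[OF C inj]
  hence P: "minv C \<in> carrier_mat n n" and CP: "C * minv C = 1\<^sub>m n" and PC: "minv C * C = 1\<^sub>m n" by auto
  show "minv C \<in> carrier_mat n n" "C * minv C = 1\<^sub>m n" "minv C * C = 1\<^sub>m n" using P CP PC by auto
  have "transpose_mat (minv C) * C = transpose_mat (C * minv C)"
    using transpose_mult[OF C P] sym by simp
  also have "\<dots> = 1\<^sub>m n" using CP by simp
  finally have PtC: "transpose_mat (minv C) * C = 1\<^sub>m n" .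
  have Pt: "transpose_mat (minv C) \<in> carrier_mat n n" using P by simp
  have "transpose_mat (minv C) = transpose_mat (minv C) * (C * minv C)" using CP Pt by simp
  also have "\<dots> = (transpose_mat (minv C) * C) * minv C" using assoc_mult_mat[OF Pt C P] by simp
  also have "\<dots> = minv C" using PtC P by simp
  finally show "transpose_mat (minv C) = minv C" .
  show "\<forall>v\<in>carrier_vec n. v \<noteq> 0\<^sub>v n \<longrightarrow> v \<bullet> (minv C *\<^sub>v v) > 0"
  proof (intro ballI impI)
    fix v :: "real vec" assume v: "v \<in> carrier_vec n" and nz: "v \<noteq> 0\<^sub>v n"
    define w where "w = minv C *\<^sub>v v"
    have w: "w \<in> carrier_vec n" unfolding w_def using P v by simp
    have Cw: "C *\<^sub>v w = v" unfolding w_def using assoc_mult_mat_vec[OF C P v, symmetric] CP v by simp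
    have wnz: "w \<noteq> 0\<^sub>v n" using Cw nz C by auto
    have "v \<bullet> (minv C *\<^sub>v v) = (C *\<^sub>v w) \<bullet> w" unfolding w_def[symmetric] Cw ..
    also have "\<dots> = w \<bullet> (C *\<^sub>v w)" using comm_scalar_prod[of "C *\<^sub>v w" n w] C w by simp
    finally show "v \<bullet> (minv C *\<^sub>v v) > 0" using pd w wnz by simp
  qed
qed

locale cdata =
  fixes n :: nat and C P G V :: "real mat" and S I :: "nat set" and y :: "nat \<Rightarrow> nat \<Rightarrow> real"
  assumes C: "C \<in> carrier_mat n n" and P: "P \<in> carrier_mat n n"
  and Csym: "\<And>i j. i < n \<Longrightarrow> j < n \<Longrightarrow> C $$ (i,j) = C $$ (j,i)"
  and Psym: "\<And>i j. i < n \<Longrightarrow> j < n \<Longrightarrow> P $$ (i,j) = P $$ (j,i)"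
  and Cpd: "\<And>u. \<exists>i<n. u i \<noteq> 0 \<Longrightarrow> 0 < (\<Sum>i<n. u i * (\<Sum>j<n. C $$ (i,j) * u j))"
  and Ppd: "\<And>u. \<exists>i<n. u i \<noteq> 0 \<Longrightarrow> 0 < (\<Sum>i<n. u i * (\<Sum>j<n. P $$ (i,j) * u j))"
  and S: "S \<subseteq> {..<n}" and I: "I \<subseteq> {..<n}" and disj: "S \<inter> I = {}"
  and Gc: "G \<in> carrier_mat (card I) n" and Vc: "V \<in> carrier_mat (card I) (card I)"
  and G0: "\<And>a j. a < card I \<Longrightarrow> j < n \<Longrightarrow> j \<notin> S \<Longrightarrow> G $$ (a,j) = 0"
  and yS: "\<And>a s. a < card I \<Longrightarrow> s \<in> S \<Longrightarrow> y a s = 0"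
  and yI: "\<And>a b. a < card I \<Longrightarrow> b < card I \<Longrightarrow> y a (pick I b) = V $$ (a,b)"
  and Py: "\<And>a j. a < card I \<Longrightarrow> j < n \<Longrightarrow>
     (\<Sum>l<n. P $$ (j,l) * y a l) = (if pick I a = j then 1 else 0) - G $$ (a,j)"
  and Cw: "\<And>a i. a < card I \<Longrightarrow> i < n \<Longrightarrow>
     y a i = (\<Sum>j<n. C $$ (i,j) * ((if pick I a = j then 1 else 0) - G $$ (a,j)))"

lemma cdata_intro:
  fixes C :: "real mat"
  assumes C: "C \<in> carrier_mat n n" and sym: "transpose_mat C = C"
  and pd: "\<forall>v\<in>carrier_vec n. v \<noteq> 0\<^sub>v n \<longrightarrow> v \<bullet> (C *\<^sub>v v) > 0"
  and S: "S \<subseteq> {..<n}" and I: "I \<subseteq> {..<n}" and disj: "S \<inter> I = {}"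
  shows "\<exists>y. cdata n C (minv C) (cond_gain C I S) (cond_cov C I S) S I y"
proof -
  note ip = inv_props[OF C sym pd]
  note ch = char[OF C pd S I disj]
  define G where "G = cond_gain C I S"
  define W where "W = E n I - G"
  have EI: "E n I \<in> carrier_mat (card I) n" using E_carrier[OF I] .
  have G: "G \<in> carrier_mat (card I) n" unfolding G_def by (rule ch(1))
  have W: "W \<in> carrier_mat (card I) n" unfolding W_def using minus_carrier_mat[OF G] .
  have WC: "W * C \<in> carrier_mat (card I) n" using W C by simp
  define y where "y = (\<lambda>a l. (W * C) $$ (a,l))"
  have Csym: "\<And>i j. i < n \<Longrightarrow> j < n \<Longrightarrow> C $$ (i,j) = C $$ (j,i)"
    using sym C by (metis carrier_matD index_transpose_mat(1))
  have Psym: "\<And>i j. i < n \<Longrightarrow> j < n \<Longrightarrow> minv C $$ (i,j) = minv C $$ (j,i)"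
    using ip(4) ip(1) by (metis carrier_matD index_transpose_mat(1))
  have Wij: "W $$ (a,j) = (if pick I a = j then 1 else 0) - G $$ (a,j)" if "a < card I" "j < n" for a j
    unfolding W_def using that EI G E_idx[OF I that] by simp
  have WCP: "W * C * minv C = W"
    using assoc_mult_mat[OF W C ip(1)] ip(2) W by simp
  show ?thesis
  proof (intro exI, unfold_locales)
    show "C \<in> carrier_mat n n" by (rule C)
    show "minv C \<in> carrier_mat n n" by (rule ip(1))
    show "\<And>i j. i < n \<Longrightarrow> j < n \<Longrightarrow> C $$ (i,j) = C $$ (j,i)" by (rule Csym)
    show "\<And>i j. i < n \<Longrightarrow> j < n \<Longrightarrow> minv C $$ (i,j) = minv C $$ (j,i)" by (rule Psym)
    show "\<And>u. \<exists>i<n. u i \<noteq> 0 \<Longrightarrow> 0 < (\<Sum>i<n. u i * (\<Sum>j<n. C $$ (i,j) * u j))"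
      using pd_sum[OF C pd] by blast
    show "\<And>u. \<exists>i<n. u i \<noteq> 0 \<Longrightarrow> 0 < (\<Sum>i<n. u i * (\<Sum>j<n. minv C $$ (i,j) * u j))"
      using pd_sum[OF ip(1) ip(5)] by blast
    show "S \<subseteq> {..<n}" "I \<subseteq> {..<n}" "S \<inter> I = {}" by (rule S, rule I, rule disj)
    show "cond_gain C I S \<in> carrier_mat (card I) n" "cond_cov C I S \<in> carrier_mat (card I) (card I)"
      by (rule ch(1), rule ch(2))
    show "\<And>a j. a < card I \<Longrightarrow> j < n \<Longrightarrow> j \<notin> S \<Longrightarrow> cond_gain C I S $$ (a,j) = 0" by (rule ch(3))
    show "y a s = 0" if a: "a < card I" and s: "s \<in> S" for a s
    proof -
      obtain t where t: "t < card S" and st: "s = pick S t"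
        using s bij_betw_imp_surj_on[OF pick_bij[of S]] S finite_subset[OF S] by force
      have "(W * C * transpose_mat (E n S)) $$ (a,t) = 0"
        using ch(4) a t unfolding W_def G_def by simp
      moreover have "W * C * transpose_mat (E n S) = submatrix (W * C) UNIV S" using mult_ESt[OF S WC] .
      ultimately show ?thesis unfolding y_def st using sub_idx_U1[OF WC S a t] by simp
    qed
    show "y a (pick I b) = cond_cov C I S $$ (a,b)" if a: "a < card I" and b: "b < card I" for a b
    proof -
      have "W * C * transpose_mat (E n I) = submatrix (W * C) UNIV I" using mult_ESt[OF I WC] .
      thus ?thesis using ch(5) sub_idx_U1[OF WC I a b] unfolding y_def W_def G_def by simp
    qed
    show "(\<Sum>l<n. minv C $$ (j,l) * y a l) = (if pick I a = j then 1 else 0) - cond_gain C I S $$ (a,j)"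
      if a: "a < card I" and j: "j < n" for a j
    proof -
      have "W $$ (a,j) = (W * C * minv C) $$ (a,j)" using WCP by simp
      also have "\<dots> = row (W * C) a \<bullet> col (minv C) j"
        using index_mult_mat(1)[of a "W * C" j "minv C"] W C ip(1) a j by simp
      also have "\<dots> = (\<Sum>l\<in>{0..<n}. (W * C) $$ (a,l) * minv C $$ (l,j))"
      proof -
        have d: "dim_row (W * C) = card I" "dim_col (W * C) = n" using carrier_matD[OF WC] by auto
        have "\<And>x. x < n \<Longrightarrow> row (W * C) a $ x = (W * C) $$ (a,x)"
          using index_row(1)[of a "W * C"] d a by simp
        thus ?thesis unfolding scalar_prod_def using ip(1) j by (intro sum.cong) auto
      qed
      also have "\<dots> = (\<Sum>l<n. minv C $$ (j,l) * y a l)"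
        unfolding lessThan_atLeast0[symmetric] y_def by (rule sum.cong) (auto simp: Psym j)
      finally show ?thesis using Wij[OF a j] unfolding G_def by simp
    qed
    show "y a i = (\<Sum>j<n. C $$ (i,j) * ((if pick I a = j then 1 else 0) - cond_gain C I S $$ (a,j)))"
      if a: "a < card I" and i: "i < n" for a i
    proof -
      have "y a i = (\<Sum>j\<in>{0..<n}. W $$ (a,j) * C $$ (j,i))"
        unfolding y_def using W C a i by (simp add: scalar_prod_def)
      also have "\<dots> = (\<Sum>j<n. C $$ (i,j) * ((if pick I a = j then 1 else 0) - cond_gain C I S $$ (a,j)))"
        unfolding lessThan_atLeast0[symmetric] by (rule sum.cong) (auto simp: Csym i Wij[OF a] G_def)
      finally show ?thesis .
    qed
  qed
qed

lemma uniq: fixes P :: "real mat"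
  assumes Ppd: "\<And>u. \<exists>i<n. u i \<noteq> 0 \<Longrightarrow> 0 < (\<Sum>i<n. u i * (\<Sum>j<n. P $$ (i,j) * u j))"
  and supp: "\<And>j. j < n \<Longrightarrow> j \<notin> T \<Longrightarrow> u j = 0"
  and eq: "\<And>t. t < n \<Longrightarrow> t \<in> T \<Longrightarrow> (\<Sum>l<n. P $$ (t,l) * u l) = 0"
  shows "\<forall>i<n. u i = 0"
proof (rule ccontr)
  assume "\<not> (\<forall>i<n. u i = 0)"
  hence pos: "0 < (\<Sum>i<n. u i * (\<Sum>j<n. P $$ (i,j) * u j))" using Ppd by blast
  have "(\<Sum>i<n. u i * (\<Sum>j<n. P $$ (i,j) * u j)) = 0"
  proof (rule sum.neutral, rule ballI)
    fix i assume "i \<in> {..<n}"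
    thus "u i * (\<Sum>j<n. P $$ (i,j) * u j) = 0" using supp eq by (cases "i \<in> T") auto
  qed
  thus False using pos by simp
qed

context cdata begin

lemma finI: "finite I" using I finite_subset by blast

lemma pickI: "b < card I \<Longrightarrow> pick I b \<in> I" using pick_in_set[of b I] by simp

lemma pickI_lt: "b < card I \<Longrightarrow> pick I b < n" using pickI I by auto

lemma pickI_S: "b < card I \<Longrightarrow> pick I b \<notin> S" using pickI disj by auto

lemma sum_I: assumes a: "a < card I" and z: "\<And>l. l < n \<Longrightarrow> l \<notin> I \<Longrightarrow> f l * y a l = 0"
  shows "(\<Sum>l<n. f l * y a l) = (\<Sum>b<card I. f (pick I b) * V $$ (a,b))"
proof -
  have "(\<Sum>l<n. f l * y a l) = (\<Sum>l\<in>I. f l * y a l)"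
    by (rule sum.mono_neutral_right) (use I z in auto)
  also have "\<dots> = (\<Sum>b<card I. f (pick I b) * y a (pick I b))" using sum_pick[OF finI] .
  also have "\<dots> = (\<Sum>b<card I. f (pick I b) * V $$ (a,b))"
    by (rule sum.cong) (auto simp: yI a)
  finally show ?thesis .
qed

lemma V_nonsing:
  assumes x: "\<And>a. a < card I \<Longrightarrow> (\<Sum>b<card I. V $$ (a,b) * x b) = 0"
  shows "\<And>b. b < card I \<Longrightarrow> x b = 0"
proof -
  define p where "p = card I"
  define w where "w = (\<lambda>a j. (if pick I a = j then 1 else 0) - G $$ (a,j))"
  define v where "v = (\<lambda>j. \<Sum>a<p. x a * w a j)"
  define Q where "Q = (\<lambda>i. \<Sum>a<p. x a * y a i)"
  have Cv: "(\<Sum>j<n. C $$ (i,j) * v j) = Q i" if i: "i < n" for i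
  proof -
    have "(\<Sum>j<n. C $$ (i,j) * v j) = (\<Sum>j<n. \<Sum>a<p. x a * (C $$ (i,j) * w a j))"
      unfolding v_def by (simp add: sum_distrib_left algebra_simps)
    also have "\<dots> = (\<Sum>a<p. \<Sum>j<n. x a * (C $$ (i,j) * w a j))" by (rule sum.swap)
    also have "\<dots> = Q i" unfolding Q_def w_def
      by (rule sum.cong) (auto simp: Cw[OF _ i] sum_distrib_left p_def)
    finally show ?thesis .
  qed
  have vi: "v i * Q i = (\<Sum>a<p. x a * (if pick I a = i then 1 else 0)) * Q i" if i: "i < n" for i
  proof (cases "i \<in> S")
    case True
    hence "Q i = 0" unfolding Q_def using yS p_def by simp
    thus ?thesis by simp
  next
    case False
    hence "\<And>a. a < p \<Longrightarrow> G $$ (a,i) = 0" using G0 i p_def by simp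
    hence "v i = (\<Sum>a<p. x a * (if pick I a = i then 1 else 0))" unfolding v_def w_def
      by (intro sum.cong) auto
    thus ?thesis by simp
  qed
  have "(\<Sum>i<n. v i * (\<Sum>j<n. C $$ (i,j) * v j)) = (\<Sum>i<n. v i * Q i)"
    by (rule sum.cong) (auto simp: Cv)
  also have "\<dots> = (\<Sum>i<n. (\<Sum>a<p. x a * (if pick I a = i then 1 else 0)) * Q i)"
    by (rule sum.cong) (auto simp: vi)
  also have "\<dots> = (\<Sum>i<n. \<Sum>a<p. x a * ((if pick I a = i then 1 else 0) * Q i))"
    by (rule sum.cong) (simp_all add: sum_distrib_right mult.assoc)
  also have "\<dots> = (\<Sum>a<p. \<Sum>i<n. x a * ((if pick I a = i then 1 else 0) * Q i))" by (rule sum.swap)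
  also have "\<dots> = (\<Sum>a<p. x a * Q (pick I a))"
  proof (rule sum.cong)
    fix a assume "a \<in> {..<p}"
    hence pa: "pick I a < n" using pickI_lt p_def by simp
    have "(\<Sum>i<n. x a * ((if pick I a = i then 1 else 0) * Q i)) = x a * (\<Sum>i<n. (if pick I a = i then 1 else 0) * Q i)"
      by (simp add: sum_distrib_left)
    also have "\<dots> = x a * Q (pick I a)" using sum_delta_lt[OF pa] by simp
    finally show "(\<Sum>i<n. x a * ((if pick I a = i then 1 else 0) * Q i)) = x a * Q (pick I a)" .
  qed simp
  also have "\<dots> = (\<Sum>a<p. \<Sum>a'<p. x a * (x a' * V $$ (a',a)))"
    unfolding Q_def by (rule sum.cong) (auto simp: yI p_def sum_distrib_left)
  also have "\<dots> = (\<Sum>a'<p. \<Sum>a<p. x a * (x a' * V $$ (a',a)))" by (rule sum.swap)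
  also have "\<dots> = (\<Sum>a'<p. x a' * (\<Sum>a<p. V $$ (a',a) * x a))"
    by (rule sum.cong) (auto simp: sum_distrib_left algebra_simps)
  also have "\<dots> = 0" using x p_def by simp
  finally have qz: "(\<Sum>i<n. v i * (\<Sum>j<n. C $$ (i,j) * v j)) = 0" .
  have v0: "\<forall>i<n. v i = 0"
  proof (rule ccontr)
    assume "\<not> (\<forall>i<n. v i = 0)"
    hence "0 < (\<Sum>i<n. v i * (\<Sum>j<n. C $$ (i,j) * v j))" using Cpd by blast
    thus False using qz by simp
  qed
  fix b assume b: "b < card I"
  have "v (pick I b) = (\<Sum>a<p. x a * (if a = b then 1 else 0))"
    unfolding v_def w_def
  proof (rule sum.cong)
    fix a assume "a \<in> {..<p}"
    hence a: "a < card I" using p_def by simp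
    have "G $$ (a, pick I b) = 0" using G0[OF a pickI_lt[OF b] pickI_S[OF b]] .
    moreover have "(pick I a = pick I b) = (a = b)" using pick_inj[OF a b] by auto
    ultimately show "x a * ((if pick I a = pick I b then 1 else 0) - G $$ (a, pick I b)) = x a * (if a = b then 1 else 0)"
      by simp
  qed simp
  also have "\<dots> = x b" using b p_def by (simp add: if_distrib sum.delta cong: if_cong)
  finally show "x b = 0" using v0 pickI_lt[OF b] by simp
qed

end

lemma condA:
  assumes c1: "cdata n C1 P1 G1 V1 S I y1" and c2: "cdata n C2 P2 G2 V2 S I y2"
  and agree: "\<And>i j. i < n \<Longrightarrow> j < n \<Longrightarrow> i \<notin> S \<or> j \<notin> S \<Longrightarrow> P1 $$ (i,j) = P2 $$ (i,j)"
  shows "G1 = G2 \<and> V1 = V2"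
proof -
  interpret A: cdata n C1 P1 G1 V1 S I y1 by (rule c1)
  interpret B: cdata n C2 P2 G2 V2 S I y2 by (rule c2)
  have yy: "y1 a l = y2 a l" if a: "a < card I" and l: "l < n" for a l
  proof -
    have "\<forall>i<n. y1 a i - y2 a i = 0"
    proof (rule uniq[of n P1 "- S"])
      show "\<And>u. \<exists>i<n. u i \<noteq> 0 \<Longrightarrow> 0 < (\<Sum>i<n. u i * (\<Sum>j<n. P1 $$ (i,j) * u j))" by (rule A.Ppd)
      show "\<And>j. j < n \<Longrightarrow> j \<notin> - S \<Longrightarrow> y1 a j - y2 a j = 0" using A.yS B.yS a by simp
      fix t assume t: "t < n" "t \<in> - S"
      have "(\<Sum>l<n. P1 $$ (t,l) * (y1 a l - y2 a l)) = (\<Sum>l<n. P1 $$ (t,l) * y1 a l) - (\<Sum>l<n. P2 $$ (t,l) * y2 a l)"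
        using t agree by (simp add: algebra_simps sum_subtractf)
      also have "\<dots> = 0" using A.Py[OF a t(1)] B.Py[OF a t(1)] A.G0[OF a t(1)] B.G0[OF a t(1)] t by simp
      finally show "(\<Sum>l<n. P1 $$ (t,l) * (y1 a l - y2 a l)) = 0" .
    qed
    thus ?thesis using l by simp
  qed
  have "G1 = G2"
  proof (rule eq_matI)
    show "dim_row G1 = dim_row G2" "dim_col G1 = dim_col G2" using A.Gc B.Gc by auto
    fix a j assume "a < dim_row G2" "j < dim_col G2"
    hence a: "a < card I" and j: "j < n" using B.Gc by auto
    show "G1 $$ (a,j) = G2 $$ (a,j)"
    proof (cases "j \<in> S")
      case False thus ?thesis using A.G0[OF a j] B.G0[OF a j] by simp
    next
      case True
      have "(\<Sum>l<n. P1 $$ (j,l) * y1 a l) = (\<Sum>l<n. P2 $$ (j,l) * y2 a l)"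
      proof (rule sum.cong)
        fix l assume "l \<in> {..<n}"
        hence l: "l < n" by simp
        show "P1 $$ (j,l) * y1 a l = P2 $$ (j,l) * y2 a l"
        proof (cases "l \<in> S")
          case True thus ?thesis using A.yS[OF a] B.yS[OF a] by simp
        next
          case False thus ?thesis using agree[OF j l] yy[OF a l] by simp
        qed
      qed simp
      thus ?thesis using A.Py[OF a j] B.Py[OF a j] by simp
    qed
  qed
  moreover have "V1 = V2"
  proof (rule eq_matI)
    show "dim_row V1 = dim_row V2" "dim_col V1 = dim_col V2" using A.Vc B.Vc by auto
    fix a b assume "a < dim_row V2" "b < dim_col V2"
    hence a: "a < card I" and b: "b < card I" using B.Vc by auto
    show "V1 $$ (a,b) = V2 $$ (a,b)" using A.yI[OF a b] B.yI[OF a b] yy[OF a A.pickI_lt[OF b]] by simp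
  qed
  ultimately show ?thesis by simp
qed

lemma (in cdata) pickI_surj: assumes "i \<in> I" obtains b where "b < card I" "i = pick I b"
  using assms bij_betw_imp_surj_on[OF pick_bij[OF finI]] by force

lemma condB:
  assumes c1: "cdata n C1 P1 G V S I y1" and c2: "cdata n C2 P2 G V S I y2"
  and agree: "\<And>i j. i < n \<Longrightarrow> j < n \<Longrightarrow> i \<notin> S \<Longrightarrow> i \<notin> I \<Longrightarrow> P1 $$ (i,j) = P2 $$ (i,j)"
  shows "\<And>i j. i \<in> I \<Longrightarrow> j < n \<Longrightarrow> P1 $$ (i,j) = P2 $$ (i,j)"
proof -
  interpret A: cdata n C1 P1 G V S I y1 by (rule c1)
  interpret B: cdata n C2 P2 G V S I y2 by (rule c2)
  have yy: "y1 a l = y2 a l" if a: "a < card I" and l: "l < n" for a l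
  proof -
    have "\<forall>i<n. y1 a i - y2 a i = 0"
    proof (rule uniq[of n P1 "- (S \<union> I)"])
      show "\<And>u. \<exists>i<n. u i \<noteq> 0 \<Longrightarrow> 0 < (\<Sum>i<n. u i * (\<Sum>j<n. P1 $$ (i,j) * u j))" by (rule A.Ppd)
      fix j assume j: "j < n" "j \<notin> - (S \<union> I)"
      show "y1 a j - y2 a j = 0"
      proof (cases "j \<in> S")
        case True thus ?thesis using A.yS B.yS a by simp
      next
        case False
        hence "j \<in> I" using j by simp
        then obtain b where b: "b < card I" "j = pick I b" by (rule A.pickI_surj)
        thus ?thesis using A.yI[OF a b(1)] B.yI[OF a b(1)] by simp
      qed
    next
      fix t assume t: "t < n" "t \<in> - (S \<union> I)"
      have "(\<Sum>l<n. P1 $$ (t,l) * (y1 a l - y2 a l)) = (\<Sum>l<n. P1 $$ (t,l) * y1 a l) - (\<Sum>l<n. P2 $$ (t,l) * y2 a l)"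
        using t agree by (simp add: algebra_simps sum_subtractf)
      also have "\<dots> = 0" using A.Py[OF a t(1)] B.Py[OF a t(1)] by simp
      finally show "(\<Sum>l<n. P1 $$ (t,l) * (y1 a l - y2 a l)) = 0" .
    qed
    thus ?thesis using l by simp
  qed
  have D0: "P1 $$ (j, pick I b) - P2 $$ (j, pick I b) = 0" if j: "j < n" and b: "b < card I" for j b
  proof -
    define f where "f = (\<lambda>l. P1 $$ (j,l) - P2 $$ (j,l))"
    have "(\<Sum>b<card I. V $$ (a,b) * f (pick I b)) = 0" if a: "a < card I" for a
    proof -
      have "(\<Sum>l<n. f l * y1 a l) = (\<Sum>l<n. P1 $$ (j,l) * y1 a l) - (\<Sum>l<n. P2 $$ (j,l) * y2 a l)"
        unfolding f_def using yy[OF a] by (simp add: algebra_simps sum_subtractf)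
      also have "\<dots> = 0" using A.Py[OF a j] B.Py[OF a j] by simp
      finally have z: "(\<Sum>l<n. f l * y1 a l) = 0" .
      have "(\<Sum>l<n. f l * y1 a l) = (\<Sum>b<card I. f (pick I b) * V $$ (a,b))"
      proof (rule A.sum_I[OF a])
        fix l assume l: "l < n" "l \<notin> I"
        show "f l * y1 a l = 0"
        proof (cases "l \<in> S")
          case True thus ?thesis using A.yS[OF a] by simp
        next
          case False
          have "P1 $$ (j,l) = P2 $$ (j,l)"
            using A.Psym[OF j l(1)] B.Psym[OF j l(1)] agree[OF l(1) j False l(2)] by simp
          thus ?thesis unfolding f_def by simp
        qed
      qed
      thus ?thesis using z by (simp add: mult.commute)
    qed
    hence "f (pick I b) = 0" using A.V_nonsing[of "\<lambda>b. f (pick I b)"] b by blast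
    thus ?thesis unfolding f_def .
  qed
  fix i j assume i: "i \<in> I" and j: "j < n"
  obtain b where b: "b < card I" "i = pick I b" using A.pickI_surj[OF i] by blast
  have il: "i < n" using A.pickI_lt b by simp
  show "P1 $$ (i,j) = P2 $$ (i,j)"
    using D0[OF j b(1)] b(2) A.Psym[OF il j] B.Psym[OF il j] by simp
qed

lemma condZ:
  assumes c: "cdata n C P G V S I y" and cover: "\<And>l. l < n \<Longrightarrow> l \<notin> S \<Longrightarrow> l \<in> I"
  and J: "J \<subseteq> S" and GJ: "\<And>a j. a < card I \<Longrightarrow> j \<in> J \<Longrightarrow> G $$ (a,j) = 0"
  shows "\<And>i j. i \<in> I \<Longrightarrow> j \<in> J \<Longrightarrow> P $$ (i,j) = 0"
proof -
  interpret A: cdata n C P G V S I y by (rule c)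
  have D0: "P $$ (j, pick I b) = 0" if jJ: "j \<in> J" and b: "b < card I" for j b
  proof -
    have jS: "j \<in> S" using J jJ by auto
    have j: "j < n" using A.S jS by auto
    define f where "f = (\<lambda>l. P $$ (j,l))"
    have "(\<Sum>b<card I. V $$ (a,b) * f (pick I b)) = 0" if a: "a < card I" for a
    proof -
      have "pick I a \<noteq> j" using A.pickI_S[OF a] jS by auto
      hence z: "(\<Sum>l<n. f l * y a l) = 0" unfolding f_def using A.Py[OF a j] GJ[OF a jJ] by simp
      have "(\<Sum>l<n. f l * y a l) = (\<Sum>b<card I. f (pick I b) * V $$ (a,b))"
      proof (rule A.sum_I[OF a])
        fix l assume l: "l < n" "l \<notin> I"
        hence "l \<in> S" using cover by blast
        thus "f l * y a l = 0" using A.yS[OF a] by simp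
      qed
      thus ?thesis using z by (simp add: mult.commute)
    qed
    hence "f (pick I b) = 0" using A.V_nonsing[of "\<lambda>b. f (pick I b)"] b by blast
    thus ?thesis unfolding f_def .
  qed
  fix i j assume i: "i \<in> I" and jJ: "j \<in> J"
  obtain b where b: "b < card I" "i = pick I b" using A.pickI_surj[OF i] by blast
  have il: "i < n" using A.pickI_lt b by simp
  have j: "j < n" using A.S J jJ by auto
  show "P $$ (i,j) = 0" using D0[OF jJ b(1)] b(2) A.Psym[OF il j] by simp
qed

lemma blk_iff: "i \<in> blk d k \<longleftrightarrow> 0 < d \<and> i div d = k"
proof
  assume "i \<in> blk d k"
  hence h: "k * d \<le> i" "i < Suc k * d" unfolding blk_def by auto
  hence d: "0 < d" by (cases d) auto
  have "i div d = k" using div_nat_eqI[of d k i] h by (simp add: mult.commute)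
  thus "0 < d \<and> i div d = k" using d by simp
next
  assume h: "0 < d \<and> i div d = k"
  have "k * d \<le> i" using h div_times_less_eq_dividend[of i d] by simp
  moreover have "i < Suc k * d" using h dividend_less_div_times[of d i] by simp
  ultimately show "i \<in> blk d k" unfolding blk_def by simp
qed

lemma blks_iff: "i \<in> blks d K \<longleftrightarrow> 0 < d \<and> i div d \<in> K"
  unfolding blks_def using blk_iff by auto

lemma lt_n_div: assumes "i < Suc N * d" shows "0 < d" "i div d \<le> N"
proof -
  show d: "0 < d" using assms by (cases d) auto
  have "i div d < Suc N" using assms d by (simp add: div_less_iff_less_mult)
  thus "i div d \<le> N" by simp
qed

lemma div_lt_n: assumes "0 < d" "i div d \<le> N" shows "i < Suc N * d"
proof -
  have "i < d + d * (i div d)" using dividend_less_times_div[of d i] assms by simp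
  also have "\<dots> \<le> d + d * N" using assms by simp
  finally show ?thesis by (simp add: algebra_simps)
qed

lemma blks_sub: assumes "K \<subseteq> {..N}" shows "blks d K \<subseteq> {..<Suc N * d}"
proof
  fix i assume "i \<in> blks d K"
  hence "0 < d" "i div d \<in> K" using blks_iff by auto
  hence "0 < d" "i div d \<le> N" using assms by auto
  thus "i \<in> {..<Suc N * d}" using div_lt_n by simp
qed

lemma blk_sub: assumes "k \<le> N" shows "blk d k \<subseteq> {..<Suc N * d}"
proof
  fix i assume "i \<in> blk d k"
  hence "0 < d" "i div d = k" using blk_iff by auto
  thus "i \<in> {..<Suc N * d}" using div_lt_n assms by simp
qed

lemma card_blk: "card (blk d k) = d" unfolding blk_def by simp

lemma pick_blk: assumes b: "b < d" shows "pick (blk d k) b = k * d + b"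
proof -
  have i: "k * d + b \<in> blk d k" using b unfolding blk_def by simp
  have "{a \<in> blk d k. a < k * d + b} = {k * d ..< k * d + b}" using b unfolding blk_def by auto
  hence "card {a \<in> blk d k. a < k * d + b} = b" by simp
  thus ?thesis using pick_card_in_set[OF i] by simp
qed

lemma sub_eq: fixes P1 P2 :: "real mat"
  assumes "P1 \<in> carrier_mat n n" "P2 \<in> carrier_mat n n" "I \<subseteq> {..<n}" "J \<subseteq> {..<n}"
  and "\<And>i j. i \<in> I \<Longrightarrow> j \<in> J \<Longrightarrow> P1 $$ (i,j) = P2 $$ (i,j)"
  shows "submatrix P1 I J = submatrix P2 I J"
proof (rule eq_matI)
  have c1: "submatrix P1 I J \<in> carrier_mat (card I) (card J)" using sub_carrier[OF assms(1,3,4)] .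
  have c2: "submatrix P2 I J \<in> carrier_mat (card I) (card J)" using sub_carrier[OF assms(2,3,4)] .
  show "dim_row (submatrix P1 I J) = dim_row (submatrix P2 I J)" "dim_col (submatrix P1 I J) = dim_col (submatrix P2 I J)"
    using c1 c2 by auto
  fix a b assume "a < dim_row (submatrix P2 I J)" "b < dim_col (submatrix P2 I J)"
  hence a: "a < card I" and b: "b < card J" using c2 by auto
  show "submatrix P1 I J $$ (a,b) = submatrix P2 I J $$ (a,b)"
    using sub_idx[OF assms(1,3,4) a b] sub_idx[OF assms(2,3,4) a b] assms(5) pick_in_set[of a I] pick_in_set[of b J] a b
    by simp
qed

lemma sub_eqD: fixes P1 P2 :: "real mat"
  assumes "P1 \<in> carrier_mat n n" "P2 \<in> carrier_mat n n" "k \<le> N" "k' \<le> N" "n = Suc N * d"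
  and eq: "submatrix P1 (blk d k) (blk d k') = submatrix P2 (blk d k) (blk d k')"
  and i: "i \<in> blk d k" and j: "j \<in> blk d k'"
  shows "P1 $$ (i,j) = P2 $$ (i,j)"
proof -
  have d: "0 < d" and ik: "i div d = k" and jk: "j div d = k'" using i j blk_iff by auto
  define a where "a = i mod d"
  define b where "b = j mod d"
  have a: "a < card (blk d k)" and b: "b < card (blk d k')" unfolding a_def b_def card_blk using d by auto
  have ei: "k * d + a = i" unfolding a_def using ik div_mult_mod_eq[of i d] by simp
  have ej: "k' * d + b = j" unfolding b_def using jk div_mult_mod_eq[of j d] by simp
  have pa: "pick (blk d k) a = i" using pick_blk[of a d k] a ei unfolding card_blk by simp
  have pb: "pick (blk d k') b = j" using pick_blk[of b d k'] b ej unfolding card_blk by simp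
  have I: "blk d k \<subseteq> {..<n}" "blk d k' \<subseteq> {..<n}" using blk_sub assms(3,4,5) by auto
  show ?thesis using sub_idx[OF assms(1) I a b] sub_idx[OF assms(2) I a b] eq pa pb by simp
qed

lemma gauss_facts: assumes "gauss_cov N d C"
  shows "C \<in> carrier_mat (Suc N * d) (Suc N * d)" "transpose_mat C = C"
    "\<forall>v\<in>carrier_vec (Suc N * d). v \<noteq> 0\<^sub>v (Suc N * d) \<longrightarrow> v \<bullet> (C *\<^sub>v v) > 0"
  using assms unfolding gauss_cov_def by auto

lemma P_sym: assumes "gauss_cov N d C" "i < Suc N * d" "j < Suc N * d"
  shows "minv C $$ (i,j) = minv C $$ (j,i)"
proof -
  note g = gauss_facts[OF assms(1)]
  note ip = inv_props[OF g]
  show ?thesis using ip(4) ip(1) assms(2,3) by (metis carrier_matD index_transpose_mat(1))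
qed

lemma neg_cancel: "- (A::real mat) = - B \<Longrightarrow> A = B" by (metis uminus_uminus_mat)

lemma zero_pat:
  assumes g: "gauss_cov N d C" and r: "reciprocal N d C"
  and i: "i < Suc N * d" and j: "j < Suc N * d"
  and k1: "1 \<le> i div d" and kN: "i div d < N"
  and far: "j div d + 2 \<le> i div d \<or> i div d + 2 \<le> j div d"
  shows "minv C $$ (i,j) = 0"
proof -
  define n where "n = Suc N * d"
  define k where "k = i div d"
  have d: "0 < d" using lt_n_div[OF i] by simp
  have k1': "1 \<le> k" and kN': "k < N" using k1 kN unfolding k_def by auto
  have jN: "j div d \<le> N" using lt_n_div[OF j] by simp
  define S where "S = blks d ({0..k-1} \<union> {k+1..N})"
  define S' where "S' = blks d {k-1, k+1}"
  define I where "I = blk d k"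
  have "k - 1 < k" "k < k + 1" "k + 1 \<le> N" using k1 kN unfolding k_def by auto
  hence "same_cond_dist C (blk d k) (blks d ({0..k-1} \<union> {k+1..N})) (blks d {k-1, k+1})"
    using r unfolding reciprocal_def by blast
  hence GG: "cond_gain C I S = cond_gain C I S'" unfolding same_cond_dist_def S_def S'_def I_def by simp
  note gf = gauss_facts[OF g]
  have Ssub: "S \<subseteq> {..<n}" unfolding S_def n_def by (rule blks_sub) (use kN' in auto)
  have S'sub: "S' \<subseteq> {..<n}" unfolding S'_def n_def by (rule blks_sub) (use kN' in auto)
  have Isub: "I \<subseteq> {..<n}" unfolding I_def n_def by (rule blk_sub) (use kN' in auto)
  have disj: "S \<inter> I = {}" unfolding S_def I_def using k1' by (auto simp: blks_iff blk_iff)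
  have disj': "S' \<inter> I = {}" unfolding S'_def I_def using k1' by (auto simp: blks_iff blk_iff)
  obtain y where c: "cdata n C (minv C) (cond_gain C I S) (cond_cov C I S) S I y"
    using cdata_intro[OF gf[folded n_def] Ssub Isub disj] by blast
  obtain y' where c': "cdata n C (minv C) (cond_gain C I S') (cond_cov C I S') S' I y'"
    using cdata_intro[OF gf[folded n_def] S'sub Isub disj'] by blast
  have cover: "l \<in> I" if "l < n" "l \<notin> S" for l
  proof -
    have "l div d \<le> N" using lt_n_div that unfolding n_def by simp
    hence "l div d = k" using that d unfolding S_def blks_iff by auto
    thus ?thesis unfolding I_def blk_iff using d by simp
  qed
  have jS: "j \<in> S" unfolding S_def blks_iff using d far jN k_def by auto
  have jS': "j \<notin> S'" unfolding S'_def blks_iff using far k_def by auto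
  have GJ: "cond_gain C I S $$ (a,j') = 0" if "a < card I" "j' \<in> {j}" for a j'
    using cdata.G0[OF c' that(1)] j jS' that(2) GG unfolding n_def by simp
  have iI: "i \<in> I" unfolding I_def blk_iff k_def using d by simp
  have "{j} \<subseteq> S" using jS by simp
  from condZ[OF c cover this GJ iI] show ?thesis by simp
qed

lemma P_carrier: "gauss_cov N d C \<Longrightarrow> minv C \<in> carrier_mat (Suc N * d) (Suc N * d)"
proof -
  assume "gauss_cov N d C"
  from inv_props[OF gauss_facts[OF this]] show ?thesis by simp
qed

lemma fwd_agree:
  assumes g1: "gauss_cov N d C1" and g2: "gauss_cov N d C2"
  and r1: "reciprocal N d C1" and r2: "reciprocal N d C2"
  and m: "same_reciprocal_model N d C1 C2"
  and i: "i < Suc N * d" and j: "j < Suc N * d" and k1: "1 \<le> i div d" and kN: "i div d < N"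
  shows "minv C1 $$ (i,j) = minv C2 $$ (i,j)"
proof -
  define k where "k = i div d"
  define q where "q = j div d"
  have d: "0 < d" using lt_n_div[OF i] by simp
  have qN: "q \<le> N" using lt_n_div[OF j] q_def by simp
  have k1': "1 \<le> k" and kN': "k < N" using k1 kN k_def by auto
  have kk: "k \<in> {1..N-1}" using k1' kN' by simp
  have iB: "i \<in> blk d k" unfolding blk_iff k_def using d by simp
  have jB: "j \<in> blk d q" unfolding blk_iff q_def using d by simp
  note P1 = P_carrier[OF g1] and P2 = P_carrier[OF g2]
  have mk: "R0 d C1 k = R0 d C2 k \<and> Rplus d C1 k = Rplus d C2 k \<and> Rminus d C1 k = Rminus d C2 k"
    using m kk unfolding same_reciprocal_model_def by blast
  consider "q = k" | "q = Suc k" | "Suc q = k" | "q + 2 \<le> k \<or> k + 2 \<le> q" by linarith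
  thus ?thesis
  proof cases
    case 1
    have "submatrix (minv C1) (blk d k) (blk d k) = submatrix (minv C2) (blk d k) (blk d k)"
      using mk unfolding R0_def blockA_def by simp
    from sub_eqD[OF P1 P2 _ _ refl this iB] show ?thesis using jB 1 kN' by simp
  next
    case 2
    have "blockB d C1 k = blockB d C2 k"
      by (rule neg_cancel) (use mk in \<open>simp add: Rplus_def\<close>)
    hence "submatrix (minv C1) (blk d k) (blk d (Suc k)) = submatrix (minv C2) (blk d k) (blk d (Suc k))"
      unfolding blockB_def .
    from sub_eqD[OF P1 P2 _ _ refl this iB] show ?thesis using jB 2 kN' by simp
  next
    case 3
    have "transpose_mat (blockB d C1 (k - 1)) = transpose_mat (blockB d C2 (k - 1))"
      by (rule neg_cancel) (use mk in \<open>simp add: Rminus_def\<close>)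
    hence "blockB d C1 (k - 1) = blockB d C2 (k - 1)" by simp
    hence "submatrix (minv C1) (blk d q) (blk d k) = submatrix (minv C2) (blk d q) (blk d k)"
      unfolding blockB_def by (simp add: 3[symmetric])
    hence "minv C1 $$ (j,i) = minv C2 $$ (j,i)" using sub_eqD[OF P1 P2 _ _ refl _ jB iB] qN kN' by simp
    thus ?thesis using P_sym[OF g1 i j] P_sym[OF g2 i j] by simp
  next
    case 4
    thus ?thesis using zero_pat[OF g1 r1 i j k1 kN] zero_pat[OF g2 r2 i j k1 kN] k_def q_def by simp
  qed
qed

lemma cml_sets:
  assumes k: "k \<in> {1..N-1}"
  shows "CML_cond N d k \<subseteq> {..<Suc N * d}" "blk d k \<subseteq> {..<Suc N * d}"
    "CML_cond N d k \<inter> blk d k = {}"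
    "\<And>x. x < Suc N * d \<Longrightarrow> x \<notin> CML_cond N d k \<Longrightarrow> k \<le> x div d \<and> x div d < N"
proof -
  have k1: "1 \<le> k" and kN: "k < N" using k by auto
  show "CML_cond N d k \<subseteq> {..<Suc N * d}" unfolding CML_cond_def by (rule blks_sub) (use kN in auto)
  show "blk d k \<subseteq> {..<Suc N * d}" by (rule blk_sub) (use kN in auto)
  show "CML_cond N d k \<inter> blk d k = {}" unfolding CML_cond_def using kN by (auto simp: blks_iff blk_iff)
  fix x assume x: "x < Suc N * d" "x \<notin> CML_cond N d k"
  have "0 < d" "x div d \<le> N" using lt_n_div[OF x(1)] by auto
  thus "k \<le> x div d \<and> x div d < N" using x(2) unfolding CML_cond_def blks_iff by auto
qed

lemma fwd:
  assumes g1: "gauss_cov N d C1" and g2: "gauss_cov N d C2"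
  and r1: "reciprocal N d C1" and r2: "reciprocal N d C2"
  and m: "same_reciprocal_model N d C1 C2"
  shows "same_CML_model N d C1 C2"
  unfolding same_CML_model_def
proof (intro ballI)
  fix k assume k: "k \<in> {1..N-1}"
  define n where "n = Suc N * d"
  define S where "S = CML_cond N d k"
  define I where "I = blk d k"
  note cs = cml_sets[OF k, where d=d, folded n_def S_def I_def]
  obtain y1 where c1: "cdata n C1 (minv C1) (cond_gain C1 I S) (cond_cov C1 I S) S I y1"
    using cdata_intro[OF gauss_facts[OF g1, folded n_def] cs(1,2,3)] by blast
  obtain y2 where c2: "cdata n C2 (minv C2) (cond_gain C2 I S) (cond_cov C2 I S) S I y2"
    using cdata_intro[OF gauss_facts[OF g2, folded n_def] cs(1,2,3)] by blast
  have k1: "1 \<le> k" using k by simp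
  have agree: "minv C1 $$ (i,j) = minv C2 $$ (i,j)" if ij: "i < n" "j < n" "i \<notin> S \<or> j \<notin> S" for i j
  proof (cases "i \<notin> S")
    case True
    thus ?thesis using fwd_agree[OF g1 g2 r1 r2 m, of i j] cs(4)[of i] ij k1 unfolding n_def by force
  next
    case False
    hence "j \<notin> S" using ij by simp
    hence "minv C1 $$ (j,i) = minv C2 $$ (j,i)"
      using fwd_agree[OF g1 g2 r1 r2 m, of j i] cs(4)[of j] ij k1 unfolding n_def by force
    thus ?thesis using P_sym[OF g1, of i j] P_sym[OF g2, of i j] ij unfolding n_def by simp
  qed
  have eqs: "cond_gain C1 I S = cond_gain C2 I S \<and> cond_cov C1 I S = cond_cov C2 I S"
    using condA[OF c1 c2 agree] by blast
  show "G_prev N d C1 k = G_prev N d C2 k \<and> G_last N d C1 k = G_last N d C2 k \<and> G_cov N d C1 k = G_cov N d C2 k"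
    unfolding G_prev_def G_last_def G_cov_def using eqs unfolding S_def I_def by simp
qed

lemma col_eq: fixes G1 G2 :: "real mat"
  assumes G1: "G1 \<in> carrier_mat r (Suc N * d)" and G2: "G2 \<in> carrier_mat r (Suc N * d)"
  and K: "K \<le> N" and eq: "submatrix G1 UNIV (blk d K) = submatrix G2 UNIV (blk d K)"
  and a: "a < r" and j: "j \<in> blk d K"
  shows "G1 $$ (a,j) = G2 $$ (a,j)"
proof -
  have d: "0 < d" and jK: "j div d = K" using j blk_iff by auto
  define b where "b = j mod d"
  have b: "b < card (blk d K)" unfolding b_def card_blk using d by simp
  have ej: "K * d + b = j" unfolding b_def using jK div_mult_mod_eq[of j d] by simp
  have pb: "pick (blk d K) b = j" using pick_blk[of b d K] b ej unfolding card_blk by simp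
  have sub: "blk d K \<subseteq> {..<Suc N * d}" using blk_sub[OF K] .
  show ?thesis using sub_idx_U1[OF G1 sub a b] sub_idx_U1[OF G2 sub a b] eq pb by simp
qed

lemma gain_eq:
  assumes g1: "gauss_cov N d C1" and g2: "gauss_cov N d C2"
  and r1: "reciprocal N d C1" and r2: "reciprocal N d C2"
  and m: "same_CML_model N d C1 C2" and k: "k \<in> {1..N-1}"
  shows "cond_gain C1 (blk d k) (CML_cond N d k) = cond_gain C2 (blk d k) (CML_cond N d k)"
proof -
  define n where "n = Suc N * d"
  define S where "S = CML_cond N d k"
  define I where "I = blk d k"
  define S2 where "S2 = blks d {k - 1, N}"
  have k1: "1 \<le> k" and kN: "k < N" using k by auto
  have setq: "{0..k-1} \<union> {N..N} = {0..<k} \<union> {N}" using k1 by auto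
  have lt: "k - 1 < k" "k < N" "N \<le> N" using k1 kN by auto
  have same: "cond_gain C I S = cond_gain C I S2" if r: "reciprocal N d C" for C
  proof -
    have "same_cond_dist C (blk d k) (blks d ({0..k-1} \<union> {N..N})) (blks d {k - 1, N})"
      using r lt unfolding reciprocal_def by blast
    thus ?thesis unfolding same_cond_dist_def S_def S2_def I_def CML_cond_def setq by simp
  qed
  have S2sub: "S2 \<subseteq> {..<n}" unfolding S2_def n_def by (rule blks_sub) (use kN in auto)
  have Isub: "I \<subseteq> {..<n}" unfolding I_def n_def by (rule blk_sub) (use kN in auto)
  have disj: "S2 \<inter> I = {}" unfolding S2_def I_def using k1 kN by (auto simp: blks_iff blk_iff)
  obtain y1 where c1: "cdata n C1 (minv C1) (cond_gain C1 I S2) (cond_cov C1 I S2) S2 I y1"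
    using cdata_intro[OF gauss_facts[OF g1, folded n_def] S2sub Isub disj] by blast
  obtain y2 where c2: "cdata n C2 (minv C2) (cond_gain C2 I S2) (cond_cov C2 I S2) S2 I y2"
    using cdata_intro[OF gauss_facts[OF g2, folded n_def] S2sub Isub disj] by blast
  have mk: "G_prev N d C1 k = G_prev N d C2 k \<and> G_last N d C1 k = G_last N d C2 k"
    using m k unfolding same_CML_model_def by blast
  have eP: "submatrix (cond_gain C1 I S2) UNIV (blk d (k - 1)) = submatrix (cond_gain C2 I S2) UNIV (blk d (k - 1))"
    using mk same[OF r1] same[OF r2] unfolding G_prev_def S_def I_def by simp
  have eL: "submatrix (cond_gain C1 I S2) UNIV (blk d N) = submatrix (cond_gain C2 I S2) UNIV (blk d N)"
    using mk same[OF r1] same[OF r2] unfolding G_last_def S_def I_def by simp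
  have G1c: "cond_gain C1 I S2 \<in> carrier_mat (card I) (Suc N * d)" using cdata.Gc[OF c1] n_def by simp
  have G2c: "cond_gain C2 I S2 \<in> carrier_mat (card I) (Suc N * d)" using cdata.Gc[OF c2] n_def by simp
  have "cond_gain C1 I S2 = cond_gain C2 I S2"
  proof (rule eq_matI)
    show "dim_row (cond_gain C1 I S2) = dim_row (cond_gain C2 I S2)"
      "dim_col (cond_gain C1 I S2) = dim_col (cond_gain C2 I S2)" using G1c G2c by auto
    fix a j assume "a < dim_row (cond_gain C2 I S2)" "j < dim_col (cond_gain C2 I S2)"
    hence a: "a < card I" and j: "j < n" using G2c n_def by auto
    show "cond_gain C1 I S2 $$ (a,j) = cond_gain C2 I S2 $$ (a,j)"
    proof (cases "j \<in> S2")
      case False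
      thus ?thesis using cdata.G0[OF c1 a j] cdata.G0[OF c2 a j] by simp
    next
      case True
      hence "j \<in> blk d (k - 1) \<or> j \<in> blk d N" unfolding S2_def blks_def by auto
      thus ?thesis
      proof
        assume "j \<in> blk d (k - 1)"
        thus ?thesis using col_eq[OF G1c G2c _ eP a] kN by simp
      next
        assume "j \<in> blk d N"
        thus ?thesis using col_eq[OF G1c G2c _ eL a] by simp
      qed
    qed
  qed
  thus ?thesis using same[OF r1] same[OF r2] unfolding S_def I_def by simp
qed

lemma bwd_agree:
  assumes g1: "gauss_cov N d C1" and g2: "gauss_cov N d C2"
  and r1: "reciprocal N d C1" and r2: "reciprocal N d C2"
  and m: "same_CML_model N d C1 C2"
  shows "\<And>i j. i < Suc N * d \<Longrightarrow> j < Suc N * d \<Longrightarrow> 1 \<le> i div d \<Longrightarrow> i div d < N \<Longrightarrow>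
     minv C1 $$ (i,j) = minv C2 $$ (i,j)"
proof -
  define n where "n = Suc N * d"
  have main: "\<forall>i j. i < n \<longrightarrow> j < n \<longrightarrow> N - t \<le> i div d \<longrightarrow> 1 \<le> i div d \<longrightarrow> i div d < N \<longrightarrow>
     minv C1 $$ (i,j) = minv C2 $$ (i,j)" for t
  proof (induction t)
    case 0
    show ?case by auto
  next
    case (Suc t)
    show ?case
    proof (intro allI impI)
      fix i j assume i: "i < n" and j: "j < n" and lo: "N - Suc t \<le> i div d" and i1: "1 \<le> i div d"
        and iN: "i div d < N"
      show "minv C1 $$ (i,j) = minv C2 $$ (i,j)"
      proof (cases "N - t \<le> i div d")
        case True thus ?thesis using Suc.IH i j i1 iN by blast
      next
        case False
        define k where "k = N - Suc t"
        have ik: "i div d = k" using False lo unfolding k_def by simp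
        have k: "k \<in> {1..N-1}" using ik i1 iN by auto
        have kt: "k + 1 = N - t" using k unfolding k_def by auto
        have d: "0 < d" using lt_n_div[of i N d] i n_def by simp
        define S where "S = CML_cond N d k"
        define I where "I = blk d k"
        note cs = cml_sets[OF k, where d=d, folded n_def S_def I_def]
        obtain y1 where c1: "cdata n C1 (minv C1) (cond_gain C1 I S) (cond_cov C1 I S) S I y1"
          using cdata_intro[OF gauss_facts[OF g1, folded n_def] cs(1,2,3)] by blast
        obtain y2 where c2: "cdata n C2 (minv C2) (cond_gain C2 I S) (cond_cov C2 I S) S I y2"
          using cdata_intro[OF gauss_facts[OF g2, folded n_def] cs(1,2,3)] by blast
        have ge: "cond_gain C2 I S = cond_gain C1 I S"
          using gain_eq[OF g1 g2 r1 r2 m k] unfolding S_def I_def by simp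
        have ce: "cond_cov C2 I S = cond_cov C1 I S"
          using m k unfolding same_CML_model_def G_cov_def S_def I_def by simp
        have c2': "cdata n C2 (minv C2) (cond_gain C1 I S) (cond_cov C1 I S) S I y2"
          using c2 unfolding ge ce .
        have agree: "minv C1 $$ (i',j') = minv C2 $$ (i',j')"
          if "i' < n" "j' < n" "i' \<notin> S" "i' \<notin> I" for i' j'
        proof -
          have "k \<le> i' div d \<and> i' div d < N" using cs(4) that(1,3) by simp
          moreover have "i' div d \<noteq> k" using that(4) d unfolding I_def blk_iff by simp
          ultimately have "N - t \<le> i' div d" "1 \<le> i' div d" "i' div d < N" using kt k by auto
          thus ?thesis using Suc.IH that(1,2) by blast
        qed
        have iI: "i \<in> I" unfolding I_def blk_iff using d ik by simp
        show ?thesis using condB[OF c1 c2' agree iI j] by simp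
      qed
    qed
  qed
  fix i j assume "i < Suc N * d" "j < Suc N * d" "1 \<le> i div d" "i div d < N"
  thus "minv C1 $$ (i,j) = minv C2 $$ (i,j)" using main[of N] unfolding n_def by simp
qed

lemma bwd:
  assumes g1: "gauss_cov N d C1" and g2: "gauss_cov N d C2"
  and r1: "reciprocal N d C1" and r2: "reciprocal N d C2"
  and m: "same_CML_model N d C1 C2"
  shows "same_reciprocal_model N d C1 C2"
  unfolding same_reciprocal_model_def
proof (intro ballI)
  fix k assume k: "k \<in> {1..N-1}"
  define n where "n = Suc N * d"
  have k1: "1 \<le> k" and kN: "k < N" using k by auto
  note P1 = P_carrier[OF g1, folded n_def] and P2 = P_carrier[OF g2, folded n_def]
  have agreeR: "minv C1 $$ (i,j) = minv C2 $$ (i,j)" if i: "i \<in> blk d k" and j: "j < n" for i j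
  proof -
    have "0 < d" "i div d = k" using i blk_iff by auto
    moreover have "i < n" using blk_sub[of k N d] kN i n_def by auto
    ultimately show ?thesis using bwd_agree[OF g1 g2 r1 r2 m, of i j] j k1 kN n_def by simp
  qed
  have sk: "blk d k \<subseteq> {..<n}" "blk d (Suc k) \<subseteq> {..<n}" "blk d (k - 1) \<subseteq> {..<n}"
    using blk_sub[of k N d] blk_sub[of "Suc k" N d] blk_sub[of "k - 1" N d] kN n_def by auto
  have A: "blockA d C1 k = blockA d C2 k" unfolding blockA_def
    by (rule sub_eq[OF P1 P2 sk(1) sk(1)]) (use agreeR sk(1) in auto)
  have B: "blockB d C1 k = blockB d C2 k" unfolding blockB_def
    by (rule sub_eq[OF P1 P2 sk(1) sk(2)]) (use agreeR sk(2) in auto)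
  have sk1: "Suc (k - 1) = k" using k1 by simp
  have B': "blockB d C1 (k - 1) = blockB d C2 (k - 1)" unfolding blockB_def sk1
  proof (rule sub_eq[OF P1 P2 sk(3) sk(1)])
    fix i j assume i: "i \<in> blk d (k - 1)" and j: "j \<in> blk d k"
    have il: "i < n" and jl: "j < n" using i j sk by auto
    have "minv C1 $$ (j,i) = minv C2 $$ (j,i)" using agreeR[OF j il] .
    thus "minv C1 $$ (i,j) = minv C2 $$ (i,j)"
      using P_sym[OF g1, of i j] P_sym[OF g2, of i j] il jl n_def by simp
  qed
  show "R0 d C1 k = R0 d C2 k \<and> Rplus d C1 k = Rplus d C2 k \<and> Rminus d C1 k = Rminus d C2 k"
    unfolding R0_def Rplus_def Rminus_def using A B B' by simp
qed

theorem proposition5: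
  fixes N d :: nat and C1 C2 :: "real mat"
  assumes "gauss_cov N d C1" and "gauss_cov N d C2"
    and "reciprocal N d C1" and "reciprocal N d C2"
  shows "same_reciprocal_model N d C1 C2 \<longleftrightarrow> same_CML_model N d C1 C2"
  using fwd[OF assms] bwd[OF assms] by blast

end
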